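(* Let $T$ be a quantizable map satisfying Condition 1 and let $U=U_\Bbbk$ be a quantization of $T$ with respect to a partition $\mathcal M_\Bbbk$ of size $N_\Bbbk$ from a sequence satisfying Condition 2. There is a constant $D(T)$, independent of $n$ and $N_\Bbbk$, such that for all $f,g\in\mathrm{Lip}(I_c)$ and all integers $n\geq1$, $$\|[U^{-n}\mathrm{Op}_\Bbbk(f)U^n,\mathrm{Op}_\Bbbk(g)]\|\leq 2D(T)\,\|g\|_{\mathrm{Lip}}\|f\|_{\mathrm{Lip}}\,\frac{\Lambda_{\max}^n}{N_\Bbbk},$$ where $\Lambda_{\max}=\max_j\Lambda_j$ and $\|\cdot\|$ is the operator norm.
   Context: Condition 1: $T:[0,1]\to[0,1]$, integers $\Lambda_1,\dots,\Lambda_l\geq2$ with $\sum\Lambda_j^{-1}=1$, consecutive intervals $I_1,\dots,I_l$ with $|I_j|=\Lambda_j^{-1}$, and $T$ affine with slope $\Lambda_j$ on $I_j$ mapping $I_j$ onto $[0,1]$. $\mathcal M_\Bbbk$ is the partition of $[0,1]$ into $E_i=[(i-1)/N_\Bbbk,i/N_\Bbbk]$; Condition 2 for a sequence $(\mathcal M_\Bbbk)$: $N_{\Bbbk+1}/N_\Bbbk$ is an integer $>1$ and all endpoints of the $I_j$ are endpoints of $\mathcal M_1$. With $B_\Bbbk(i,j)=|E_i\cap T^{-1}E_j|/|E_i|$, a quantization is a unitary matrix $U_\Bbbk$ with $B_\Bbbk(j,i)=|U_\Bbbk(i,j)|^2$; $T$ is quantizable if such $U_\Bbbk$ exist for all $\Bbbk$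 for some sequence satisfying Condition 2. $\mathrm{Op}_\Bbbk(f)$ is the diagonal matrix with $(i,i)$ entry $N_\Bbbk\int_{E_i}f\,dx$. $I_c$ is $[0,1]$ with $0$ and $1$ identified, with metric $d(x,y)=\min\{|x-y|,|x-y-1|\}$; $\|f\|_{\mathrm{Lip}}=\sup|f|+\sup_{x\neq y}|f(x)-f(y)|/d(x,y)$, and $\mathrm{Lip}(I_c)$ is the space where this is finite. *)

theory Defs
  imports "HOL-Analysis.Analysis"
begin

(* Condition 1: T on [0,1], slopes Lambda 1..Lambda l (integers >= 2, sum of reciprocals 1),
   consecutive intervals I_j = [a (j-1), a j] with a 0 = 0 and |I_j| = 1/Lambda j,
   T affine with slope Lambda j on I_j mapping I_j onto [0,1].
   (At the shared endpoints the two affine pieces disagree; T is only constrained to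
   take values in [0,1] there.) *)
definition cond1 :: "(real \<Rightarrow> real) \<Rightarrow> nat \<Rightarrow> (nat \<Rightarrow> nat) \<Rightarrow> (nat \<Rightarrow> real) \<Rightarrow> bool" where
  "cond1 T l \<Lambda> a \<longleftrightarrow>
     l \<ge> 1 \<and>
     (\<forall>j\<in>{1..l}. \<Lambda> j \<ge> 2) \<and>
     (\<Sum>j=1..l. 1 / real (\<Lambda> j)) = 1 \<and>
     a 0 = 0 \<and>
     (\<forall>j\<in>{1..l}. a j = a (j - 1) + 1 / real (\<Lambda> j)) \<and>
     (\<forall>x\<in>{0..1}. T x \<in> {0..1}) \<and>
     (\<forall>j\<in>{1..l}. \<forall>x. a (j - 1) < x \<and> x < a j \<longrightarrow> T x = real (\<Lambda> j) * (x - a (j - 1)))"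

definition cond2 :: "(nat \<Rightarrow> nat) \<Rightarrow> nat \<Rightarrow> (nat \<Rightarrow> real) \<Rightarrow> bool" where
  "cond2 N l a \<longleftrightarrow>
     (\<forall>k\<ge>1. N k > 0) \<and>
     (\<forall>k\<ge>1. N k dvd N (Suc k) \<and> N (Suc k) div N k > 1) \<and>
     (\<forall>j\<le>l. \<exists>m::nat. m \<le> N 1 \<and> a j = real m / real (N 1))"

(* the cells E_i of M with N cells; 0-based: cell i = [i/N, (i+1)/N], i < N *)
definition cell :: "nat \<Rightarrow> nat \<Rightarrow> real set" where
  "cell N i = {real i / real N .. real (Suc i) / real N}"

definition Bmat :: "(real \<Rightarrow> real) \<Rightarrow> nat \<Rightarrow> nat \<Rightarrow> nat \<Rightarrow> real" where
  "Bmat T N i j =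
     measure lebesgue (cell N i \<inter> {x\<in>{0..1}. T x \<in> cell N j}) / measure lebesgue (cell N i)"

(* N x N complex matrices as functions nat => nat => complex, indices < N *)
definition is_unitary :: "nat \<Rightarrow> (nat \<Rightarrow> nat \<Rightarrow> complex) \<Rightarrow> bool" where
  "is_unitary N U \<longleftrightarrow>
     (\<forall>i<N. \<forall>j<N. (\<Sum>m<N. cnj (U m i) * U m j) = (if i = j then 1 else 0))"

definition is_quantization :: "(real \<Rightarrow> real) \<Rightarrow> nat \<Rightarrow> (nat \<Rightarrow> nat \<Rightarrow> complex) \<Rightarrow> bool" where
  "is_quantization T N U \<longleftrightarrow>
     is_unitary N U \<and> (\<forall>i<N. \<forall>j<N. Bmat T N j i = (cmod (U i j))\<^sup>2)"

definition quantizable :: "(real \<Rightarrow> real) \<Rightarrow> nat \<Rightarrow> (nat \<Rightarrow> real) \<Rightarrow> bool" where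
  "quantizable T l a \<longleftrightarrow>
     (\<exists>N. cond2 N l a \<and> (\<forall>k\<ge>1. \<exists>U. is_quantization T (N k) U))"

definition mmul :: "nat \<Rightarrow> (nat \<Rightarrow> nat \<Rightarrow> complex) \<Rightarrow> (nat \<Rightarrow> nat \<Rightarrow> complex) \<Rightarrow> (nat \<Rightarrow> nat \<Rightarrow> complex)" where
  "mmul N A B = (\<lambda>i j. \<Sum>m<N. A i m * B m j)"

definition mid :: "nat \<Rightarrow> nat \<Rightarrow> complex" where
  "mid = (\<lambda>i j. if i = j then 1 else 0)"

fun mpow :: "nat \<Rightarrow> (nat \<Rightarrow> nat \<Rightarrow> complex) \<Rightarrow> nat \<Rightarrow> (nat \<Rightarrow> nat \<Rightarrow> complex)" where
  "mpow N A 0 = mid"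
| "mpow N A (Suc n) = mmul N (mpow N A n) A"

definition madj :: "(nat \<Rightarrow> nat \<Rightarrow> complex) \<Rightarrow> (nat \<Rightarrow> nat \<Rightarrow> complex)" where
  "madj A = (\<lambda>i j. cnj (A j i))"

definition commutator :: "nat \<Rightarrow> (nat \<Rightarrow> nat \<Rightarrow> complex) \<Rightarrow> (nat \<Rightarrow> nat \<Rightarrow> complex) \<Rightarrow> (nat \<Rightarrow> nat \<Rightarrow> complex)" where
  "commutator N A B = (\<lambda>i j. mmul N A B i j - mmul N B A i j)"

definition Op :: "nat \<Rightarrow> (real \<Rightarrow> complex) \<Rightarrow> (nat \<Rightarrow> nat \<Rightarrow> complex)" where
  "Op N f = (\<lambda>i j. if i = j then of_nat N * integral (cell N i) f else 0)"

definition opnorm :: "nat \<Rightarrow> (nat \<Rightarrow> nat \<Rightarrow> complex) \<Rightarrow> real" where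
  "opnorm N A = Sup {sqrt (\<Sum>i<N. (cmod (\<Sum>j<N. A i j * v j))\<^sup>2) | v.
                       (\<Sum>j<N. (cmod (v j))\<^sup>2) \<le> 1}"

(* the circle metric on [0,1] with 0 ~ 1 *)
definition dc :: "real \<Rightarrow> real \<Rightarrow> real" where
  "dc x y = min \<bar>x - y\<bar> (1 - \<bar>x - y\<bar>)"

definition in_LipIc :: "(real \<Rightarrow> complex) \<Rightarrow> bool" where
  "in_LipIc f \<longleftrightarrow> bounded (f ` {0..1}) \<and>
     (\<exists>L. \<forall>x\<in>{0..1}. \<forall>y\<in>{0..1}. cmod (f x - f y) \<le> L * dc x y)"

definition lip_norm :: "(real \<Rightarrow> complex) \<Rightarrow> real" where
  "lip_norm f = (SUP x\<in>{0..1}. cmod (f x)) +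
     (SUP p\<in>{(x, y). x \<in> {0..1} \<and> y \<in> {0..1} \<and> dc x y > 0}.
        cmod (f (fst p) - f (snd p)) / dc (fst p) (snd p))"

end

theory Submission
  imports Defs
begin


definition trunc :: "nat \<Rightarrow> (nat \<Rightarrow> complex) \<Rightarrow> (nat \<Rightarrow> complex)" where
  "trunc N v = (\<lambda>i. if i < N then v i else 0)"
definition app :: "nat \<Rightarrow> (nat \<Rightarrow> nat \<Rightarrow> complex) \<Rightarrow> (nat \<Rightarrow> complex) \<Rightarrow> (nat \<Rightarrow> complex)" where
  "app N A v = (\<lambda>i. if i < N then (\<Sum>j<N. A i j * v j) else 0)"
definition ns :: "nat \<Rightarrow> (nat \<Rightarrow> complex) \<Rightarrow> real" where
  "ns N v = (\<Sum>i<N. (cmod (v i))\<^sup>2)"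
definition ip :: "nat \<Rightarrow> (nat \<Rightarrow> complex) \<Rightarrow> (nat \<Rightarrow> complex) \<Rightarrow> complex" where
  "ip N x y = (\<Sum>i<N. x i * cnj (y i))"

lemma app_trunc[simp]: "app N A (trunc N v) = app N A v"
  by (auto simp: app_def trunc_def intro!: sum.cong ext)

lemma trunc_app[simp]: "trunc N (app N A v) = app N A v"
  by (auto simp: app_def trunc_def)

lemma delta_sum: "(\<Sum>k<(N::nat). (if i = k then 1 else 0) * (v k::complex)) = (if i < N then v i else 0)"
  by (induction N) (auto simp: less_Suc_eq)

lemma app_mid: "app N mid v = trunc N v"
  by (auto simp: app_def trunc_def mid_def delta_sum)

lemma app_mmul: "app N (mmul N A B) v = app N A (app N B v)"
proof (rule ext)
  fix i
  show "app N (mmul N A B) v i = app N A (app N B v) i"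
  proof (cases "i < N")
    case True
    have "(\<Sum>j<N. (\<Sum>m<N. A i m * B m j) * v j) = (\<Sum>j<N. \<Sum>m<N. A i m * (B m j * v j))"
      by (simp add: sum_distrib_right mult.assoc)
    also have "\<dots> = (\<Sum>m<N. \<Sum>j<N. A i m * (B m j * v j))" by (rule sum.swap)
    also have "\<dots> = (\<Sum>m<N. A i m * app N B v m)"
      by (auto simp: sum_distrib_left app_def intro!: sum.cong)
    finally show ?thesis using True by (simp add: app_def mmul_def)
  qed (simp add: app_def)
qed

lemma app_diff: "app N A (\<lambda>i. x i - y i) = (\<lambda>i. app N A x i - app N A y i)"
  by (auto simp: app_def algebra_simps sum_subtractf)

lemma app_comm: "app N (commutator N A B) v = (\<lambda>i. app N A (app N B v) i - app N B (app N A v) i)"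
proof -
  have "app N (commutator N A B) v = (\<lambda>i. app N (mmul N A B) v i - app N (mmul N B A) v i)"
    by (auto simp: app_def commutator_def algebra_simps sum_subtractf)
  then show ?thesis by (simp add: app_mmul)
qed

lemma ns_trunc[simp]: "ns N (trunc N v) = ns N v"
  by (auto simp: ns_def trunc_def intro!: sum.cong)

lemma ns_nonneg: "ns N v \<ge> 0"
  by (simp add: ns_def sum_nonneg)

lemma ip_self: "ip N x x = of_real (ns N x)"
  unfolding ip_def ns_def of_real_sum by (intro sum.cong refl complex_norm_square[symmetric])

lemma ip_adj: "ip N (app N A x) y = ip N x (app N (madj A) y)"
proof -
  have "ip N (app N A x) y = (\<Sum>i<N. \<Sum>j<N. A i j * x j * cnj (y i))"
    by (simp add: ip_def app_def sum_distrib_right)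
  also have "\<dots> = (\<Sum>j<N. \<Sum>i<N. A i j * x j * cnj (y i))" by (rule sum.swap)
  also have "\<dots> = ip N x (app N (madj A) y)"
    by (auto simp: ip_def app_def madj_def sum_distrib_left intro!: sum.cong)
  finally show ?thesis .
qed

lemma madj_madj[simp]: "madj (madj A) = A"
  by (simp add: madj_def)

lemma ip_adj2: "ip N (app N (madj A) x) y = ip N x (app N A y)"
  using ip_adj[of N "madj A" x y] by simp

lemma ip_trunc: "ip N (trunc N x) y = ip N x y"
  by (auto simp: ip_def trunc_def intro!: sum.cong)

lemma ip_CS: "cmod (ip N x y) \<le> sqrt (ns N x) * sqrt (ns N y)"
proof -
  have "cmod (ip N x y) \<le> (\<Sum>i<N. cmod (x i) * cmod (y i))"
    unfolding ip_def by (rule order_trans[OF norm_sum]) (simp add: norm_mult)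
  also have "\<dots> = (\<Sum>i<N. \<bar>cmod (x i)\<bar> * \<bar>cmod (y i)\<bar>)" by simp
  also have "\<dots> \<le> L2_set (\<lambda>i. cmod (x i)) {..<N} * L2_set (\<lambda>i. cmod (y i)) {..<N}"
    by (rule L2_set_mult_ineq)
  also have "\<dots> = sqrt (ns N x) * sqrt (ns N y)"
    by (simp add: L2_set_def ns_def)
  finally show ?thesis .
qed

lemma unitary_app: assumes "is_unitary N U"
  shows "app N (madj U) (app N U v) = trunc N v"
proof (rule ext)
  fix i
  show "app N (madj U) (app N U v) i = trunc N v i"
  proof (cases "i < N")
    case True
    have "(\<Sum>j<N. cnj (U j i) * app N U v j) = (\<Sum>j<N. \<Sum>k<N. cnj (U j i) * (U j k * v k))"
      by (auto simp: app_def sum_distrib_left intro!: sum.cong)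
    also have "\<dots> = (\<Sum>k<N. \<Sum>j<N. cnj (U j i) * (U j k * v k))" by (rule sum.swap)
    also have "\<dots> = (\<Sum>k<N. (\<Sum>j<N. cnj (U j i) * U j k) * v k)"
      by (simp add: sum_distrib_right mult.assoc)
    also have "\<dots> = (\<Sum>k<N. (if i = k then 1 else 0) * v k)"
      using assms True unfolding is_unitary_def by (intro sum.cong) auto
    also have "\<dots> = v i" using True by (simp add: delta_sum)
    finally show ?thesis using True by (simp add: app_def madj_def trunc_def)
  qed (simp add: app_def trunc_def)
qed

lemma app_mpow_Suc: "app N (mpow N A (Suc n)) v = app N (mpow N A n) (app N A v)"
  by (simp add: app_mmul)

lemma mpow_comm: "app N (mpow N U n) (app N U w) = app N U (app N (mpow N U n) w)"
proof (induction n arbitrary: w)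
  case 0
  then show ?case by (simp add: app_mid)
next
  case (Suc n)
  then show ?case by (simp add: app_mmul)
qed

lemma adj_pow: "ip N (app N (mpow N (madj U) n) x) y = ip N x (app N (mpow N U n) y)"
proof (induction n arbitrary: x)
  case 0
  then show ?case by (simp add: app_mid ip_trunc ip_def trunc_def)
next
  case (Suc n)
  have "ip N (app N (mpow N (madj U) (Suc n)) x) y = ip N (app N (madj U) x) (app N (mpow N U n) y)"
    by (simp add: app_mmul Suc)
  also have "\<dots> = ip N x (app N U (app N (mpow N U n) y))" by (rule ip_adj2)
  also have "\<dots> = ip N x (app N (mpow N U (Suc n)) y)" by (simp add: app_mmul mpow_comm)
  finally show ?case .
qed

lemma pow_unitary: assumes "is_unitary N U"
  shows "app N (mpow N (madj U) n) (app N (mpow N U n) w) = trunc N w"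
proof (induction n arbitrary: w)
  case 0
  then show ?case by (rule ext) (simp add: app_mid trunc_def)
next
  case (Suc n)
  have "app N (mpow N (madj U) (Suc n)) (app N (mpow N U (Suc n)) w)
     = app N (mpow N (madj U) n) (app N (madj U) (app N U (app N (mpow N U n) w)))"
    by (simp add: app_mmul mpow_comm)
  also have "\<dots> = trunc N w" by (simp add: unitary_app[OF assms] Suc)
  finally show ?case .
qed

lemma pow_iso: assumes "is_unitary N U"
  shows "ns N (app N (mpow N U n) w) = ns N w"
proof -
  have "of_real (ns N (app N (mpow N U n) w)) = ip N (app N (mpow N U n) w) (app N (mpow N U n) w)"
    by (simp add: ip_self)
  also have "\<dots> = cnj (ip N (app N (mpow N U n) w) (app N (mpow N U n) w))"
    by (simp add: ip_self)
  also have "\<dots> = cnj (ip N (app N (mpow N (madj U) n) (app N (mpow N U n) w)) w)"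
    by (simp add: adj_pow)
  also have "\<dots> = of_real (ns N w)"
    by (simp add: pow_unitary[OF assms] ip_trunc ip_self)
  finally show ?thesis by simp
qed

lemma powadj_contr: assumes "is_unitary N U"
  shows "ns N (app N (mpow N (madj U) n) z) \<le> ns N z"
proof -
  let ?y = "app N (mpow N (madj U) n) z"
  have "of_real (ns N ?y) = ip N z (app N (mpow N U n) ?y)"
    by (simp add: ip_self[symmetric] adj_pow)
  then have "ns N ?y = cmod (ip N z (app N (mpow N U n) ?y))"
    by (metis norm_of_real ns_nonneg abs_of_nonneg)
  also have "\<dots> \<le> sqrt (ns N z) * sqrt (ns N ?y)"
    using ip_CS pow_iso[OF assms] by metis
  finally have *: "ns N ?y \<le> sqrt (ns N z) * sqrt (ns N ?y)" .
  show ?thesis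
  proof (cases "ns N ?y = 0")
    case True then show ?thesis using ns_nonneg by simp
  next
    case False
    have "sqrt (ns N ?y) * sqrt (ns N ?y) \<le> sqrt (ns N z) * sqrt (ns N ?y)"
      using * ns_nonneg[of N ?y] by (simp add: real_sqrt_mult_self)
    moreover have "sqrt (ns N ?y) > 0" using False ns_nonneg[of N ?y] by simp
    ultimately have "sqrt (ns N ?y) \<le> sqrt (ns N z)"
      using mult_le_cancel_right_pos by blast
    then show ?thesis using ns_nonneg[of N z] ns_nonneg[of N ?y] by simp
  qed
qed



lemma dc_sym: "dc x y = dc y x"
  by (simp add: dc_def abs_minus_commute)

lemma dc_le_abs: "dc x y \<le> \<bar>x - y\<bar>"
  by (simp add: dc_def)

lemma dc_le_1: "dc x y \<le> 1 - \<bar>x - y\<bar>"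
  by (simp add: dc_def)

lemma dc_nonneg: "x \<in> {0..1} \<Longrightarrow> y \<in> {0..1} \<Longrightarrow> dc x y \<ge> 0"
  by (auto simp: dc_def)

lemma dc_self[simp]: "dc x x = 0"
  by (simp add: dc_def)

lemma dc_tri: "x \<in> {0..1} \<Longrightarrow> y \<in> {0..1} \<Longrightarrow> z \<in> {0..1} \<Longrightarrow> dc x z \<le> dc x y + dc y z"
  unfolding dc_def by (auto simp: min_def abs_if split: if_splits)

lemma card_int_interval:
  fixes a b :: real
  shows "real (card {q::nat. a \<le> real q \<and> real q \<le> b}) \<le> max 0 (b - a + 1)"
proof (cases "b < a")
  case True
  then have "{q::nat. a \<le> real q \<and> real q \<le> b} = {}" by auto
  then show ?thesis by (metis card.empty max.cobounded1 of_nat_0)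
next
  case False
  define k where "k = nat \<lceil>a\<rceil>"
  define w where "w = nat \<lfloor>b - a\<rfloor>"
  have sub: "{q::nat. a \<le> real q \<and> real q \<le> b} \<subseteq> {k..k+w}"
  proof
    fix q assume q: "q \<in> {q::nat. a \<le> real q \<and> real q \<le> b}"
    then have "a \<le> real q" "real q \<le> b" by auto
    then have "\<lceil>a\<rceil> \<le> int q" by (metis ceiling_mono ceiling_of_nat)
    then have kq: "k \<le> q" using \<open>a \<le> real q\<close> by (simp add: k_def)
    have "real q - real k \<le> b - a"
    proof (cases "\<lceil>a\<rceil> \<ge> 0")
      case True
      then have "real k = real_of_int \<lceil>a\<rceil>" by (simp add: k_def)
      then show ?thesis using \<open>real q \<le> b\<close> ceiling_correct[of a] by linarith
    next
      case False
      then have "k = 0" by (simp add: k_def)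
      moreover have "a < 0" using False ceiling_correct[of a] by linarith
      ultimately show ?thesis using \<open>real q \<le> b\<close> by simp
    qed
    then have "real (q - k) \<le> b - a" using kq by (simp add: of_nat_diff)
    then have "int (q - k) \<le> \<lfloor>b - a\<rfloor>" by (simp add: le_floor_iff)
    then have "q - k \<le> w" by (simp add: w_def)
    then show "q \<in> {k..k+w}" using kq by simp
  qed
  then have "card {q::nat. a \<le> real q \<and> real q \<le> b} \<le> card {k..k+w}"
    by (intro card_mono) auto
  also have "\<dots> = w + 1" by simp
  also have "real (w + 1) \<le> b - a + 1"
    using False by (simp add: w_def)
  finally show ?thesis by linarith
qed

lemma count_centers:
  fixes \<rho> x :: real and Q :: nat
  assumes rho: "\<rho> > 0" and Q: "Q = nat \<lceil>1/\<rho>\<rceil>" and x: "x \<in> {0..1}"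
  shows "card {q\<in>{..<Q}. dc x (real q * \<rho>) \<le> 2*\<rho>} \<le> 11"
proof -
  let ?S = "{q\<in>{..<Q}. dc x (real q * \<rho>) \<le> 2*\<rho>}"
  define S1 where "S1 = {q::nat. x/\<rho> - 2 \<le> real q \<and> real q \<le> x/\<rho> - 2 + 4}"
  define S2 where "S2 = {q::nat. (x+1)/\<rho> - 2 \<le> real q \<and> real q \<le> 1/\<rho>}"
  define S3 where "S3 = {q::nat. 0 \<le> real q \<and> real q \<le> (x-1)/\<rho> + 2}"
  have qlt: "real q * \<rho> < 1" if "q < Q" for q
  proof -
    have "int q < \<lceil>1/\<rho>\<rceil>" using that Q by (simp add: zless_nat_eq_int_zless)
    then have "int q + 1 \<le> \<lceil>1/\<rho>\<rceil>" by linarith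
    then have "real q + 1 \<le> real_of_int \<lceil>1/\<rho>\<rceil>" by linarith
    then have "real q < 1/\<rho>" using ceiling_correct[of "1/\<rho>"] by linarith
    then show ?thesis using rho by (simp add: field_simps)
  qed
  have "?S \<subseteq> S1 \<union> S2 \<union> S3"
  proof
    fix q assume "q \<in> ?S"
    then have qQ: "q < Q" and d: "dc x (real q * \<rho>) \<le> 2*\<rho>" by auto
    have q1: "real q * \<rho> < 1" using qlt[OF qQ] .
    have q0: "real q * \<rho> \<ge> 0" using rho by simp
    have "\<bar>x - real q*\<rho>\<bar> \<le> 2*\<rho> \<or> 1 - \<bar>x - real q*\<rho>\<bar> \<le> 2*\<rho>"
      using d unfolding dc_def by linarith
    then consider "\<bar>x - real q*\<rho>\<bar> \<le> 2*\<rho>" | "real q*\<rho> - x \<ge> 1 - 2*\<rho>" | "x - real q*\<rho> \<ge> 1 - 2*\<rho>"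
      by linarith
    then show "q \<in> S1 \<union> S2 \<union> S3"
    proof cases
      case 1
      then have "x - 2*\<rho> \<le> real q * \<rho>" "real q * \<rho> \<le> x + 2*\<rho>" by auto
      then have "x/\<rho> - 2 \<le> real q" "real q \<le> x/\<rho> + 2" using rho by (simp_all add: field_simps)
      then show ?thesis by (simp add: S1_def)
    next
      case 2
      then have "(x+1)/\<rho> - 2 \<le> real q" using rho by (simp add: field_simps)
      moreover have "real q \<le> 1/\<rho>" using q1 rho by (simp add: field_simps)
      ultimately show ?thesis by (simp add: S2_def)
    next
      case 3
      then have "real q \<le> (x-1)/\<rho> + 2" using rho by (simp add: field_simps)
      then show ?thesis by (simp add: S3_def)
    qed
  qed
  have fin: "finite {q::nat. a \<le> real q \<and> real q \<le> b}" for a b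
  proof (rule finite_subset[of _ "{..nat \<lceil>b\<rceil>}"])
    show "{q::nat. a \<le> real q \<and> real q \<le> b} \<subseteq> {..nat \<lceil>b\<rceil>}"
    proof
      fix q assume "q \<in> {q::nat. a \<le> real q \<and> real q \<le> b}"
      then have "real q \<le> b" by simp
      then have "int q \<le> \<lceil>b\<rceil>" by (metis ceiling_mono ceiling_of_nat)
      then show "q \<in> {..nat \<lceil>b\<rceil>}" by simp
    qed
  qed simp
  have c1: "card S1 \<le> 5"
    using card_int_interval[where a="x/\<rho> - 2" and b="x/\<rho> - 2 + 4"] unfolding S1_def by linarith
  have c2: "real (card S2) \<le> 3"
  proof -
    have "max 0 (1/\<rho> - ((x+1)/\<rho> - 2) + 1) \<le> 3"
      using rho x by (auto simp: field_simps)
    then show ?thesis using card_int_interval[where a="(x+1)/\<rho> - 2" and b="1/\<rho>"] unfolding S2_def by linarith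
  qed
  have c3: "real (card S3) \<le> 3"
  proof -
    have "max 0 ((x-1)/\<rho> + 2 - 0 + 1) \<le> 3"
      using rho x by (auto simp: field_simps)
    then show ?thesis using card_int_interval[where a=0 and b="(x-1)/\<rho> + 2"] unfolding S3_def by linarith
  qed
  have "finite (S1 \<union> S2 \<union> S3)" unfolding S1_def S2_def S3_def
    by (simp only: finite_Un) (intro conjI fin)
  then have "card ?S \<le> card (S1 \<union> S2 \<union> S3)"
    by (rule card_mono) fact
  also have "\<dots> \<le> card S1 + card S2 + card S3"
    by (metis card_Un_le add_le_mono1 order_trans)
  finally show ?thesis using c1 c2 c3 by linarith
qed

lemma cover_center:
  fixes \<rho> x :: real and Q :: nat
  assumes rho: "\<rho> > 0" and Q: "Q = nat \<lceil>1/\<rho>\<rceil>" and x: "0 \<le> x" "x < 1"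
  shows "\<exists>q<Q. dc x (real q * \<rho>) \<le> \<rho>"
proof -
  define q where "q = nat \<lfloor>x/\<rho>\<rfloor>"
  have xr: "x/\<rho> \<ge> 0" using x rho by simp
  have "real q \<le> x/\<rho>" using xr by (simp add: q_def)
  moreover have "x/\<rho> < real q + 1" using xr by (simp add: q_def)
  ultimately have a: "real q * \<rho> \<le> x" "x < real q * \<rho> + \<rho>" using rho by (simp_all add: field_simps)
  have "x/\<rho> < 1/\<rho>" using x rho by (simp add: divide_strict_right_mono)
  then have "real q < 1/\<rho>" using \<open>real q \<le> x/\<rho>\<close> by linarith
  then have "q < Q" using Q by (simp add: zless_nat_eq_int_zless) linarith
  moreover have "dc x (real q * \<rho>) \<le> \<rho>" using a dc_le_abs[of x "real q * \<rho>"] by simp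
  ultimately show ?thesis by blast
qed



definition diag :: "(nat \<Rightarrow> complex) \<Rightarrow> nat \<Rightarrow> nat \<Rightarrow> complex" where
  "diag \<phi> = (\<lambda>i j. if i = j then \<phi> i else 0)"

lemma delta_sum2: "(\<Sum>j<(N::nat). (if i = j then c else 0) * (w j::complex)) = (if i < N then c * w i else 0)"
  by (induction N) (auto simp: less_Suc_eq)

lemma app_diag: "app N (diag \<phi>) w = (\<lambda>i. if i < N then \<phi> i * w i else 0)"
  by (auto simp: app_def diag_def delta_sum2)

lemma sq_diff_le: "(cmod (x - y))\<^sup>2 \<le> 2 * (cmod x)\<^sup>2 + 2 * (cmod y)\<^sup>2"
proof -
  have "cmod (x - y) \<le> cmod x + cmod y" by (rule norm_triangle_ineq4)
  then have "(cmod (x - y))\<^sup>2 \<le> (cmod x + cmod y)\<^sup>2" by (simp add: power_mono)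
  also have "\<dots> \<le> 2 * (cmod x)\<^sup>2 + 2 * (cmod y)\<^sup>2"
  proof -
    have e1: "(cmod x + cmod y)\<^sup>2 = (cmod x)\<^sup>2 + 2 * (cmod x * cmod y) + (cmod y)\<^sup>2"
      by (simp add: power2_sum)
    have e2: "(cmod x - cmod y)\<^sup>2 = (cmod x)\<^sup>2 - 2 * (cmod x * cmod y) + (cmod y)\<^sup>2"
      by (simp add: power2_diff)
    have "0 \<le> (cmod x - cmod y)\<^sup>2" by simp
    then show ?thesis using e1 e2 by linarith
  qed
  finally show ?thesis .
qed

lemma sum_swap_count:
  "(\<Sum>q<(Q::nat). \<Sum>m<(N::nat). if P q m then (X m::real) else 0) = (\<Sum>m<N. X m * real (card {q\<in>{..<Q}. P q m}))"
proof -
  have "(\<Sum>q<Q. \<Sum>m<N. if P q m then X m else 0) = (\<Sum>m<N. \<Sum>q<Q. if P q m then X m else 0)"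
    by (rule sum.swap)
  also have "\<dots> = (\<Sum>m<N. \<Sum>q\<in>{q\<in>{..<Q}. P q m}. X m)"
    by (rule sum.cong[OF refl]) (simp add: sum.inter_filter[symmetric])
  also have "\<dots> = (\<Sum>m<N. X m * real (card {q\<in>{..<Q}. P q m}))"
    by (simp add: mult.commute)
  finally show ?thesis .
qed

lemma center_in:
  assumes rho: "\<rho> > 0" and "q < nat \<lceil>1/\<rho>\<rceil>"
  shows "real q * \<rho> \<in> {0..1}"
proof -
  have "int q < \<lceil>1/\<rho>\<rceil>" using assms by (simp add: zless_nat_eq_int_zless)
  then have "int q + 1 \<le> \<lceil>1/\<rho>\<rceil>" by linarith
  then have "real q + 1 \<le> real_of_int \<lceil>1/\<rho>\<rceil>" by linarith
  then have "real q < 1/\<rho>" using ceiling_correct[of "1/\<rho>"] by linarith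
  then show ?thesis using rho by (simp add: field_simps)
qed

lemma band:
  fixes N :: nat and H :: "nat \<Rightarrow> nat \<Rightarrow> complex" and \<phi> :: "nat \<Rightarrow> complex"
    and \<kappa> :: "real \<Rightarrow> complex" and \<rho> h L :: real
  assumes N: "N > 0" and rho: "\<rho> > 0" and h: "h \<ge> 0" and L: "L \<ge> 0"
    and Hb: "\<And>v. ns N (app N H v) \<le> h\<^sup>2 * ns N v"
    and Hs: "\<And>m m'. m < N \<Longrightarrow> m' < N \<Longrightarrow> H m m' \<noteq> 0 \<Longrightarrow> dc (real m / real N) (real m' / real N) \<le> \<rho>"
    and ph: "\<And>m y. m < N \<Longrightarrow> y \<in> {0..1} \<Longrightarrow> cmod (\<phi> m - \<kappa> y) \<le> L * (dc (real m / real N) y + 1 / real N)"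
  shows "ns N (app N (commutator N (diag \<phi>) H) v) \<le> 110 * (L * h * (\<rho> + 1 / real N))\<^sup>2 * ns N v"
proof -
  define K where "K = app N (commutator N (diag \<phi>) H) v"
  define a where "a = L * (\<rho> + 1 / real N)"
  define Q where "Q = nat \<lceil>1/\<rho>\<rceil>"
  define B where "B q m \<longleftrightarrow> dc (real m / real N) (real q * \<rho>) \<le> \<rho>" for q m
  define C where "C q m \<longleftrightarrow> dc (real m / real N) (real q * \<rho>) \<le> 2 * \<rho>" for q m
  define w where "w q = (\<lambda>m'. if C q m' then (\<phi> m' - \<kappa> (real q * \<rho>)) * v m' else 0)" for q
  have a0: "a \<ge> 0" using L rho by (simp add: a_def)
  have pts: "real m / real N \<in> {0..1}" if "m < N" for m
    using that by (simp add: field_simps)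
  have ctr: "real q * \<rho> \<in> {0..1}" if "q < Q" for q
    using center_in[OF rho] that by (simp add: Q_def)
  have Kform: "K m = \<phi> m * app N H v m - (\<Sum>j<N. H m j * (\<phi> j * v j))" if "m < N" for m
    unfolding K_def app_comm app_diag using that by (simp add: app_def)
  have ident: "K m = (\<phi> m - \<kappa> (real q * \<rho>)) * app N H v m - app N H (w q) m"
    if q: "q < Q" and m: "m < N" and b: "B q m" for q m
  proof -
    have "app N H (w q) m = (\<Sum>j<N. H m j * ((\<phi> j - \<kappa> (real q * \<rho>)) * v j))"
      unfolding app_def using m
    proof (simp, intro sum.cong refl)
      fix j assume j: "j \<in> {..<N}"
      show "H m j * w q j = H m j * ((\<phi> j - \<kappa> (real q * \<rho>)) * v j)"
      proof (cases "H m j = 0")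
        case False
        then have "dc (real m / real N) (real j / real N) \<le> \<rho>" using Hs m j by auto
        then have "dc (real j / real N) (real q * \<rho>) \<le> 2 * \<rho>"
          using dc_tri[OF pts[of j] pts[of m] ctr[OF q]] dc_sym[of "real m / real N" "real j / real N"] b j m
          unfolding B_def by auto
        then show ?thesis by (simp add: w_def C_def)
      qed simp
    qed
    also have "\<dots> = (\<Sum>j<N. H m j * (\<phi> j * v j)) - \<kappa> (real q * \<rho>) * (\<Sum>j<N. H m j * v j)"
      by (simp add: algebra_simps sum_subtractf sum_distrib_left)
    finally show ?thesis using Kform[OF m] m by (simp add: app_def algebra_simps)
  qed
  have pm: "(cmod (K m))\<^sup>2 \<le> 2 * a\<^sup>2 * (cmod (app N H v m))\<^sup>2 + 2 * (cmod (app N H (w q) m))\<^sup>2"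
    if q: "q < Q" and m: "m < N" and b: "B q m" for q m
  proof -
    have c: "cmod (\<phi> m - \<kappa> (real q * \<rho>)) \<le> a"
    proof -
      have "L * (dc (real m / real N) (real q * \<rho>) + 1 / real N) \<le> L * (\<rho> + 1 / real N)"
        using b L unfolding B_def by (intro mult_left_mono) auto
      then show ?thesis using ph[OF m ctr[OF q]] unfolding a_def by linarith
    qed
    have "(cmod (K m))\<^sup>2 \<le> 2 * (cmod ((\<phi> m - \<kappa> (real q * \<rho>)) * app N H v m))\<^sup>2 + 2 * (cmod (app N H (w q) m))\<^sup>2"
      using ident[OF q m b] sq_diff_le by simp
    also have "(cmod ((\<phi> m - \<kappa> (real q * \<rho>)) * app N H v m))\<^sup>2 \<le> a\<^sup>2 * (cmod (app N H v m))\<^sup>2"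
      by (simp add: norm_mult power_mult_distrib c mult_right_mono power_mono)
    finally show ?thesis by simp
  qed
  have wb: "ns N (w q) \<le> (2 * a)\<^sup>2 * (\<Sum>m<N. if C q m then (cmod (v m))\<^sup>2 else 0)"
    if q: "q < Q" for q
    unfolding ns_def sum_distrib_left
  proof (intro sum_mono)
    fix m assume m: "m \<in> {..<N}"
    show "(cmod (w q m))\<^sup>2 \<le> (2 * a)\<^sup>2 * (if C q m then (cmod (v m))\<^sup>2 else 0)"
    proof (cases "C q m")
      case True
      have c: "cmod (\<phi> m - \<kappa> (real q * \<rho>)) \<le> 2 * a"
      proof -
        have "L * (dc (real m / real N) (real q * \<rho>) + 1 / real N) \<le> L * (2 * \<rho> + 1 / real N)"
          using True L unfolding C_def by (intro mult_left_mono) auto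
        then have "cmod (\<phi> m - \<kappa> (real q * \<rho>)) \<le> L * (2 * \<rho> + 1 / real N)"
          using ph[of m "real q * \<rho>"] m ctr[OF q] by simp
        also have "\<dots> \<le> L * (2 * (\<rho> + 1 / real N))"
          using L by (intro mult_left_mono) (simp_all add: divide_right_mono)
        also have "\<dots> = 2 * a" unfolding a_def by simp
        finally show ?thesis .
      qed
      then have "(cmod (\<phi> m - \<kappa> (real q * \<rho>)))\<^sup>2 \<le> (2 * a)\<^sup>2"
        by (intro power_mono) auto
      then show ?thesis using True
        by (simp add: w_def norm_mult power_mult_distrib mult_right_mono)
    qed (simp add: w_def)
  qed
  have perq: "(\<Sum>m<N. if B q m then (cmod (K m))\<^sup>2 else 0)
      \<le> 2 * a\<^sup>2 * (\<Sum>m<N. if B q m then (cmod (app N H v m))\<^sup>2 else 0)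
        + 2 * h\<^sup>2 * (2 * a)\<^sup>2 * (\<Sum>m<N. if C q m then (cmod (v m))\<^sup>2 else 0)"
    if q: "q < Q" for q
  proof -
    have "(\<Sum>m<N. if B q m then (cmod (K m))\<^sup>2 else 0)
        \<le> (\<Sum>m<N. if B q m then 2 * a\<^sup>2 * (cmod (app N H v m))\<^sup>2 + 2 * (cmod (app N H (w q) m))\<^sup>2 else 0)"
      by (intro sum_mono) (auto intro: pm[OF q])
    also have "\<dots> = 2 * a\<^sup>2 * (\<Sum>m<N. if B q m then (cmod (app N H v m))\<^sup>2 else 0)
        + 2 * (\<Sum>m<N. if B q m then (cmod (app N H (w q) m))\<^sup>2 else 0)"
      unfolding sum_distrib_left sum.distrib[symmetric] by (intro sum.cong refl) auto
    also have "(\<Sum>m<N. if B q m then (cmod (app N H (w q) m))\<^sup>2 else 0) \<le> ns N (app N H (w q))"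
      unfolding ns_def by (intro sum_mono) auto
    also have "\<dots> \<le> h\<^sup>2 * ns N (w q)" by (rule Hb)
    also have "\<dots> \<le> h\<^sup>2 * ((2 * a)\<^sup>2 * (\<Sum>m<N. if C q m then (cmod (v m))\<^sup>2 else 0))"
      by (intro mult_left_mono wb[OF q]) simp
    finally show ?thesis by (simp add: algebra_simps)
  qed
  have cardC: "real (card {q\<in>{..<Q}. C q m}) \<le> 11" if m: "m < N" for m
    using count_centers[OF rho Q_def pts[OF m]] unfolding C_def by simp
  have cardB: "real (card {q\<in>{..<Q}. B q m}) \<le> 11" if m: "m < N" for m
  proof -
    have "card {q\<in>{..<Q}. B q m} \<le> card {q\<in>{..<Q}. C q m}"
      by (rule card_mono) (auto simp: B_def C_def rho intro: order_trans)
    then show ?thesis using cardC[OF m] by linarith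
  qed
  have cardB1: "real (card {q\<in>{..<Q}. B q m}) \<ge> 1" if m: "m < N" for m
  proof -
    have "real m / real N < 1" using m by (simp add: field_simps)
    then obtain q where "q < Q" "B q m"
      using cover_center[OF rho Q_def, of "real m / real N"] unfolding B_def by auto
    then have "{q\<in>{..<Q}. B q m} \<noteq> {}" by auto
    moreover have "finite {q\<in>{..<Q}. B q m}" by simp
    ultimately have "card {q\<in>{..<Q}. B q m} \<noteq> 0" by (simp only: card_eq_0_iff) blast
    then show ?thesis by (metis One_nat_def Suc_leI neq0_conv of_nat_1 of_nat_le_iff)
  qed
  have "ns N K = (\<Sum>m<N. (cmod (K m))\<^sup>2)" by (simp add: ns_def)
  also have "\<dots> \<le> (\<Sum>m<N. (cmod (K m))\<^sup>2 * real (card {q\<in>{..<Q}. B q m}))"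
  proof (intro sum_mono)
    fix m assume "m \<in> {..<N}"
    then show "(cmod (K m))\<^sup>2 \<le> (cmod (K m))\<^sup>2 * real (card {q\<in>{..<Q}. B q m})"
      using mult_left_mono[OF cardB1[of m], of "(cmod (K m))\<^sup>2"] by simp
  qed
  also have "\<dots> = (\<Sum>q<Q. \<Sum>m<N. if B q m then (cmod (K m))\<^sup>2 else 0)"
    by (rule sum_swap_count[symmetric])
  also have "\<dots> \<le> (\<Sum>q<Q. 2 * a\<^sup>2 * (\<Sum>m<N. if B q m then (cmod (app N H v m))\<^sup>2 else 0)
        + 2 * h\<^sup>2 * (2 * a)\<^sup>2 * (\<Sum>m<N. if C q m then (cmod (v m))\<^sup>2 else 0))"
    by (intro sum_mono perq) simp
  also have "\<dots> = 2 * a\<^sup>2 * (\<Sum>m<N. (cmod (app N H v m))\<^sup>2 * real (card {q\<in>{..<Q}. B q m}))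
        + 2 * h\<^sup>2 * (2 * a)\<^sup>2 * (\<Sum>m<N. (cmod (v m))\<^sup>2 * real (card {q\<in>{..<Q}. C q m}))"
    unfolding sum.distrib sum_distrib_left[symmetric] sum_swap_count ..
  also have "\<dots> \<le> 2 * a\<^sup>2 * (11 * ns N (app N H v)) + 2 * h\<^sup>2 * (2 * a)\<^sup>2 * (11 * ns N v)"
  proof -
    have "(\<Sum>m<N. (cmod (app N H v m))\<^sup>2 * real (card {q\<in>{..<Q}. B q m})) \<le> 11 * ns N (app N H v)"
      unfolding ns_def sum_distrib_left
    proof (intro sum_mono)
      fix m assume "m \<in> {..<N}"
      then show "(cmod (app N H v m))\<^sup>2 * real (card {q\<in>{..<Q}. B q m}) \<le> 11 * (cmod (app N H v m))\<^sup>2"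
        using mult_left_mono[OF cardB[of m], of "(cmod (app N H v m))\<^sup>2"] by (simp add: mult.commute)
    qed
    moreover have "(\<Sum>m<N. (cmod (v m))\<^sup>2 * real (card {q\<in>{..<Q}. C q m})) \<le> 11 * ns N v"
      unfolding ns_def sum_distrib_left
    proof (intro sum_mono)
      fix m assume "m \<in> {..<N}"
      then show "(cmod (v m))\<^sup>2 * real (card {q\<in>{..<Q}. C q m}) \<le> 11 * (cmod (v m))\<^sup>2"
        using mult_left_mono[OF cardC[of m], of "(cmod (v m))\<^sup>2"] by (simp add: mult.commute)
    qed
    ultimately show ?thesis
      by (intro add_mono mult_left_mono) auto
  qed
  also have "\<dots> \<le> 2 * a\<^sup>2 * (11 * (h\<^sup>2 * ns N v)) + 2 * h\<^sup>2 * (2 * a)\<^sup>2 * (11 * ns N v)"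
    by (intro add_mono mult_left_mono Hb) auto
  also have "\<dots> = 110 * (a * h)\<^sup>2 * ns N v" by (simp add: power2_eq_square algebra_simps)
  finally show ?thesis by (simp add: K_def a_def algebra_simps)
qed



definition Smap :: "(nat \<Rightarrow> nat) \<Rightarrow> (nat \<Rightarrow> real) \<Rightarrow> real \<Rightarrow> real" where
  "Smap \<Lambda> a x = (if x < 1 then real (\<Lambda> (LEAST j. x < a j)) * (x - a ((LEAST j. x < a j) - 1)) else 0)"

definition Lmax :: "(nat \<Rightarrow> nat) \<Rightarrow> nat \<Rightarrow> real" where
  "Lmax \<Lambda> l = real (Max (\<Lambda> ` {1..l}))"

lemma a_sum:
  assumes c: "cond1 T l \<Lambda> a" and j: "j \<le> l"
  shows "a j = (\<Sum>t=1..j. 1 / real (\<Lambda> t))"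
  using j
proof (induction j)
  case 0
  then show ?case using c by (simp add: cond1_def)
next
  case (Suc j)
  then have "a (Suc j) = a j + 1 / real (\<Lambda> (Suc j))" using c unfolding cond1_def by auto
  then show ?case using Suc by simp
qed

lemma a_l: "cond1 T l \<Lambda> a \<Longrightarrow> a l = 1"
  using a_sum[of T l \<Lambda> a l] by (simp add: cond1_def)

lemma a_mono:
  assumes c: "cond1 T l \<Lambda> a" and "i \<le> j" "j \<le> l"
  shows "a i \<le> a j"
proof -
  have "a i = (\<Sum>t=1..i. 1 / real (\<Lambda> t))" using a_sum[OF c] assms by simp
  also have "\<dots> \<le> (\<Sum>t=1..j. 1 / real (\<Lambda> t))"
    by (rule sum_mono2) (use assms in auto)
  also have "\<dots> = a j" using a_sum[OF c] assms by simp
  finally show ?thesis .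
qed

lemma a_range: "cond1 T l \<Lambda> a \<Longrightarrow> j \<le> l \<Longrightarrow> 0 \<le> a j \<and> a j \<le> 1"
  using a_mono[of T l \<Lambda> a 0 j] a_mono[of T l \<Lambda> a j l] a_l[of T l \<Lambda> a]
  by (auto simp: cond1_def)

lemma Lam_bounds:
  assumes c: "cond1 T l \<Lambda> a" and j: "j \<in> {1..l}"
  shows "2 \<le> real (\<Lambda> j)" "real (\<Lambda> j) \<le> Lmax \<Lambda> l"
  using c j by (auto simp: cond1_def Lmax_def)

lemma Lmax_ge2: assumes c: "cond1 T l \<Lambda> a" shows "2 \<le> Lmax \<Lambda> l"
proof -
  have "1 \<in> {1..l}" using c by (simp add: cond1_def)
  from Lam_bounds[OF c this] show ?thesis by linarith
qed

lemma Sfacts: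
  assumes c: "cond1 T l \<Lambda> a" and x: "0 \<le> x" "x < 1"
  shows "\<exists>j\<in>{1..l}. a (j - 1) \<le> x \<and> x < a j \<and> (LEAST j. x < a j) = j
     \<and> Smap \<Lambda> a x = real (\<Lambda> j) * (x - a (j - 1))
     \<and> 1 - Smap \<Lambda> a x = real (\<Lambda> j) * (a j - x)"
proof -
  define j where "j = (LEAST j. x < a j)"
  have ex: "x < a l" using a_l[OF c] x by simp
  then have xj: "x < a j" unfolding j_def by (rule LeastI)
  have jl: "j \<le> l" unfolding j_def using ex by (rule Least_le)
  have j0: "j \<noteq> 0" using xj x c by (cases j) (auto simp: cond1_def)
  have "\<not> x < a (j - 1)" using j0 unfolding j_def by (metis diff_less less_numeral_extra(1) not_less_Least bot_nat_0.not_eq_extremum j_def)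
  then have aj1: "a (j - 1) \<le> x" by simp
  have step: "a j = a (j - 1) + 1 / real (\<Lambda> j)" using c j0 jl unfolding cond1_def by auto
  have L2: "2 \<le> real (\<Lambda> j)" using Lam_bounds(1)[OF c, of j] j0 jl by simp
  have S: "Smap \<Lambda> a x = real (\<Lambda> j) * (x - a (j - 1))" using x by (simp add: Smap_def j_def)
  have "1 - Smap \<Lambda> a x = real (\<Lambda> j) * (a j - x)"
    using S step L2 by (simp add: algebra_simps)
  then show ?thesis using j0 jl aj1 xj S by (auto simp: j_def)
qed

lemma S_range:
  assumes c: "cond1 T l \<Lambda> a" and x: "x \<in> {0..1}"
  shows "Smap \<Lambda> a x \<in> {0..1}"
proof (cases "x < 1")
  case True
  then obtain j where j: "j \<in> {1..l}" "a (j - 1) \<le> x" "x < a j"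
     "Smap \<Lambda> a x = real (\<Lambda> j) * (x - a (j - 1))" "1 - Smap \<Lambda> a x = real (\<Lambda> j) * (a j - x)"
    using Sfacts[OF c, of x] x by auto
  have "0 \<le> real (\<Lambda> j) * (x - a (j - 1))" using j by simp
  moreover have "0 \<le> real (\<Lambda> j) * (a j - x)" using j by simp
  ultimately show ?thesis using j(4,5) by auto
next
  case False
  then show ?thesis by (simp add: Smap_def)
qed

lemma S_lip_le:
  assumes c: "cond1 T l \<Lambda> a" and x: "x \<in> {0..1}" and y: "y \<in> {0..1}" and xy: "x \<le> y"
  shows "dc (Smap \<Lambda> a x) (Smap \<Lambda> a y) \<le> Lmax \<Lambda> l * dc x y"
proof -
  let ?L = "Lmax \<Lambda> l"
  have L2: "2 \<le> ?L" using Lmax_ge2[OF c] .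
  have Sx: "Smap \<Lambda> a x \<in> {0..1}" and Sy: "Smap \<Lambda> a y \<in> {0..1}" using S_range[OF c] x y by auto
  have main: "dc (Smap \<Lambda> a x) (Smap \<Lambda> a y) \<le> ?L * (y - x) \<and> dc (Smap \<Lambda> a x) (Smap \<Lambda> a y) \<le> ?L * (1 - (y - x))"
  proof (cases "y < 1")
    case False
    then have y1: "y = 1" using y by auto
    show ?thesis
    proof (cases "x < 1")
      case False
      then have "x = 1" using x by auto
      then show ?thesis using y1 L2 by simp
    next
      case True
      obtain j where j: "j \<in> {1..l}" "a (j - 1) \<le> x" "x < a j"
        "Smap \<Lambda> a x = real (\<Lambda> j) * (x - a (j - 1))" "1 - Smap \<Lambda> a x = real (\<Lambda> j) * (a j - x)"
        using Sfacts[OF c, of x] x True by auto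
      have Lj: "real (\<Lambda> j) \<le> ?L" using Lam_bounds(2)[OF c j(1)] .
      have a1: "0 \<le> a (j - 1)" "a j \<le> 1" using a_range[OF c, of "j - 1"] a_range[OF c, of j] j(1) by auto
      have Sy0: "Smap \<Lambda> a y = 0" using y1 by (simp add: Smap_def)
      have "real (\<Lambda> j) * (x - a (j - 1)) \<le> ?L * x"
        using Lj j(2) a1 x by (intro mult_mono) auto
      moreover have "real (\<Lambda> j) * (a j - x) \<le> ?L * (1 - x)"
        using Lj j(3) a1 x by (intro mult_mono) auto
      moreover have "dc (Smap \<Lambda> a x) 0 \<le> Smap \<Lambda> a x" "dc (Smap \<Lambda> a x) 0 \<le> 1 - Smap \<Lambda> a x"
        using Sx dc_le_abs[of "Smap \<Lambda> a x" 0] dc_le_1[of "Smap \<Lambda> a x" 0] by auto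
      ultimately show ?thesis using j(4,5) Sy0 y1 by simp
    qed
  next
    case True
    then have x1: "x < 1" using xy by simp
    obtain j where j: "j \<in> {1..l}" "a (j - 1) \<le> x" "x < a j" "(LEAST j. x < a j) = j"
      "Smap \<Lambda> a x = real (\<Lambda> j) * (x - a (j - 1))" "1 - Smap \<Lambda> a x = real (\<Lambda> j) * (a j - x)"
      using Sfacts[OF c, of x] x x1 by auto
    obtain k where k: "k \<in> {1..l}" "a (k - 1) \<le> y" "y < a k" "(LEAST j. y < a j) = k"
      "Smap \<Lambda> a y = real (\<Lambda> k) * (y - a (k - 1))" "1 - Smap \<Lambda> a y = real (\<Lambda> k) * (a k - y)"
      using Sfacts[OF c, of y] y True by auto
    have jk: "j \<le> k"
    proof -
      have "x < a k" using k(3) xy by simp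
      then have "(LEAST j. x < a j) \<le> k" by (rule Least_le)
      then show ?thesis using j(4) by simp
    qed
    have Lj: "real (\<Lambda> j) \<le> ?L" using Lam_bounds(2)[OF c j(1)] .
    have Lk: "real (\<Lambda> k) \<le> ?L" using Lam_bounds(2)[OF c k(1)] .
    have a1: "0 \<le> a (j - 1)" "a k \<le> 1" using a_range[OF c, of "j - 1"] a_range[OF c, of k] j(1) k(1) by auto
    show ?thesis
    proof (cases "j = k")
      case True
      have step: "a j = a (j - 1) + 1 / real (\<Lambda> j)" using c j(1) unfolding cond1_def by auto
      have L2j: "2 \<le> real (\<Lambda> j)" using Lam_bounds(1)[OF c j(1)] .
      have "y - x < 1 / real (\<Lambda> j)" using step j(2) k(3) True by simp
      also have "\<dots> \<le> 1 / 2" using L2j by (simp add: field_simps)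
      finally have yx: "y - x < 1/2" .
      have d: "Smap \<Lambda> a y - Smap \<Lambda> a x = real (\<Lambda> j) * (y - x)"
        using j(5) k(5) True by (simp add: algebra_simps)
      have "dc (Smap \<Lambda> a x) (Smap \<Lambda> a y) \<le> \<bar>Smap \<Lambda> a x - Smap \<Lambda> a y\<bar>" by (rule dc_le_abs)
      also have "\<dots> = real (\<Lambda> j) * (y - x)"
      proof -
        have "0 \<le> real (\<Lambda> j) * (y - x)" using xy by simp
        then show ?thesis using d by (metis abs_minus_commute abs_of_nonneg)
      qed
      also have "\<dots> \<le> ?L * (y - x)" using Lj xy by (intro mult_right_mono) auto
      finally have A: "dc (Smap \<Lambda> a x) (Smap \<Lambda> a y) \<le> ?L * (y - x)" .
      have "dc (Smap \<Lambda> a x) (Smap \<Lambda> a y) \<le> 1" using dc_le_1[of "Smap \<Lambda> a x" "Smap \<Lambda> a y"] by simp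
      also have "1 \<le> ?L * (1 - (y - x))"
      proof -
        have "2 * (1/2) \<le> ?L * (1 - (y - x))" using L2 yx by (intro mult_mono) auto
        then show ?thesis by simp
      qed
      finally show ?thesis using A by simp
    next
      case False
      then have jk': "j \<le> k - 1" using jk by simp
      have ajk: "a j \<le> a (k - 1)" using a_mono[OF c jk'] k(1) by auto
      have B1: "real (\<Lambda> j) * (a j - x) \<le> ?L * (a j - x)" using Lj j(3) by (intro mult_right_mono) auto
      have B2: "real (\<Lambda> k) * (y - a (k - 1)) \<le> ?L * (y - a (k - 1))" using Lk k(2) by (intro mult_right_mono) auto
      have B3: "real (\<Lambda> j) * (x - a (j - 1)) \<le> ?L * (x - a (j - 1))" using Lj j(2) by (intro mult_right_mono) auto
      have B4: "real (\<Lambda> k) * (a k - y) \<le> ?L * (a k - y)" using Lk k(3) by (intro mult_right_mono) auto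
      have d1: "dc (Smap \<Lambda> a x) (Smap \<Lambda> a y) \<le> 1 - Smap \<Lambda> a x + Smap \<Lambda> a y"
        using dc_le_1[of "Smap \<Lambda> a x" "Smap \<Lambda> a y"] by linarith
      have d2: "dc (Smap \<Lambda> a x) (Smap \<Lambda> a y) \<le> 1 + Smap \<Lambda> a x - Smap \<Lambda> a y"
        using dc_le_1[of "Smap \<Lambda> a x" "Smap \<Lambda> a y"] by linarith
      have "?L * (a j - x) + ?L * (y - a (k - 1)) \<le> ?L * (y - x)"
        using ajk L2 by (simp add: algebra_simps mult_left_mono)
      moreover have "?L * (x - a (j - 1)) + ?L * (a k - y) \<le> ?L * (1 - (y - x))"
      proof -
        have "?L * (x - a (j - 1)) + ?L * (a k - y) = ?L * ((x - a (j - 1)) + (a k - y))"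
          by (simp add: algebra_simps)
        also have "\<dots> \<le> ?L * (1 - (y - x))" using a1 L2 by (intro mult_left_mono) auto
        finally show ?thesis .
      qed
      ultimately show ?thesis using d1 d2 B1 B2 B3 B4 j(5,6) k(5,6) by linarith
    qed
  qed
  have "dc x y = y - x \<or> dc x y = 1 - (y - x)" using xy by (auto simp: dc_def min_def)
  then show ?thesis using main by auto
qed

lemma S_lip:
  assumes c: "cond1 T l \<Lambda> a" and x: "x \<in> {0..1}" and y: "y \<in> {0..1}"
  shows "dc (Smap \<Lambda> a x) (Smap \<Lambda> a y) \<le> Lmax \<Lambda> l * dc x y"
proof (cases "x \<le> y")
  case True then show ?thesis using S_lip_le[OF c x y] by simp
next
  case False then show ?thesis using S_lip_le[OF c y x] dc_sym by (metis linear)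
qed

lemma Sn_range: "cond1 T l \<Lambda> a \<Longrightarrow> x \<in> {0..1} \<Longrightarrow> (Smap \<Lambda> a ^^ n) x \<in> {0..1}"
  by (induction n) (auto simp del: atLeastAtMost_iff intro: S_range)

lemma Sn_lip:
  assumes c: "cond1 T l \<Lambda> a" and x: "x \<in> {0..1}" and y: "y \<in> {0..1}"
  shows "dc ((Smap \<Lambda> a ^^ n) x) ((Smap \<Lambda> a ^^ n) y) \<le> Lmax \<Lambda> l ^ n * dc x y"
proof (induction n)
  case 0 then show ?case by simp
next
  case (Suc n)
  have "dc ((Smap \<Lambda> a ^^ Suc n) x) ((Smap \<Lambda> a ^^ Suc n) y) \<le> Lmax \<Lambda> l * dc ((Smap \<Lambda> a ^^ n) x) ((Smap \<Lambda> a ^^ n) y)"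
    using S_lip[OF c Sn_range[OF c x] Sn_range[OF c y]] by simp
  also have "\<dots> \<le> Lmax \<Lambda> l * (Lmax \<Lambda> l ^ n * dc x y)"
    using Suc Lmax_ge2[OF c] by (intro mult_left_mono) auto
  finally show ?case by simp
qed

lemma T_eq_S:
  assumes c: "cond1 T l \<Lambda> a" and x: "x \<in> {0..1}" and na: "x \<notin> a ` {0..l}"
  shows "T x = Smap \<Lambda> a x"
proof -
  have x1: "x < 1" using x na a_l[OF c] by (metis atLeastAtMost_iff image_eqI le_less order_refl zero_le)
  obtain j where j: "j \<in> {1..l}" "a (j - 1) \<le> x" "x < a j" "Smap \<Lambda> a x = real (\<Lambda> j) * (x - a (j - 1))"
    using Sfacts[OF c, of x] x x1 by auto
  have "a (j - 1) \<noteq> x" using na j(1) by force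
  then have "a (j - 1) < x" using j(2) by simp
  then have "T x = real (\<Lambda> j) * (x - a (j - 1))" using c j(1,3) unfolding cond1_def by blast
  then show ?thesis using j(4) by simp
qed



lemma U_witness:
  assumes c: "cond1 T l \<Lambda> a" and q: "is_quantization T N U" and N: "N > 0"
    and i: "i < N" and j: "j < N" and u: "U i j \<noteq> 0"
  shows "\<exists>x. x \<in> cell N j \<and> x \<in> {0..1} \<and> Smap \<Lambda> a x \<in> cell N i"
proof -
  define X where "X = cell N j \<inter> {x\<in>{0..1}. T x \<in> cell N i}"
  have "Bmat T N j i = (cmod (U i j))\<^sup>2" using q i j by (simp add: is_quantization_def)
  then have "Bmat T N j i \<noteq> 0" using u by simp
  then have mX: "measure lebesgue X \<noteq> 0" by (auto simp: Bmat_def X_def)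
  have "\<exists>x\<in>X. x \<notin> a ` {0..l}"
  proof (rule ccontr)
    assume "\<not> ?thesis"
    then have "X \<subseteq> a ` {0..l}" by auto
    then have "finite X" by (rule finite_subset) simp
    then have "negligible X" by (rule negligible_finite)
    then have "measure lebesgue X = 0" by (rule negligible_imp_measure0)
    then show False using mX by simp
  qed
  then obtain x where x: "x \<in> X" "x \<notin> a ` {0..l}" by blast
  then have x01: "x \<in> {0..1}" by (simp add: X_def)
  have "T x = Smap \<Lambda> a x" by (rule T_eq_S[OF c x01 x(2)])
  then show ?thesis using x x01 by (auto simp: X_def)
qed

lemma U_step:
  assumes c: "cond1 T l \<Lambda> a" and q: "is_quantization T N U" and N: "N > 0"
    and i: "i < N" and j: "j < N" and u: "U i j \<noteq> 0"
  shows "real N * dc (Smap \<Lambda> a (real j / real N)) (real i / real N) \<le> Lmax \<Lambda> l + 1"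
proof -
  obtain x where x: "x \<in> cell N j" "x \<in> {0..1}" "Smap \<Lambda> a x \<in> cell N i"
    using U_witness[OF assms] by blast
  let ?L = "Lmax \<Lambda> l"
  have Npos: "real N > 0" using N by simp
  have pj: "real j / real N \<in> {0..1}" and pi: "real i / real N \<in> {0..1}" using i j by (auto simp: field_simps)
  have Sx: "Smap \<Lambda> a x \<in> {0..1}" using S_range[OF c x(2)] .
  have Sj: "Smap \<Lambda> a (real j / real N) \<in> {0..1}" using S_range[OF c pj] .
  have xj: "\<bar>real j / real N - x\<bar> \<le> 1 / real N"
    using x(1) by (auto simp: cell_def add_divide_distrib)
  have xi: "\<bar>Smap \<Lambda> a x - real i / real N\<bar> \<le> 1 / real N"
    using x(3) by (auto simp: cell_def add_divide_distrib)
  have "dc (Smap \<Lambda> a (real j / real N)) (Smap \<Lambda> a x) \<le> ?L * dc (real j / real N) x"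
    by (rule S_lip[OF c pj x(2)])
  also have "\<dots> \<le> ?L * (1 / real N)"
    using Lmax_ge2[OF c] dc_le_abs[of "real j / real N" x] xj by (intro mult_left_mono) auto
  finally have d1: "dc (Smap \<Lambda> a (real j / real N)) (Smap \<Lambda> a x) \<le> ?L / real N" by simp
  have d2: "dc (Smap \<Lambda> a x) (real i / real N) \<le> 1 / real N"
    using dc_le_abs[of "Smap \<Lambda> a x" "real i / real N"] xi by simp
  have "dc (Smap \<Lambda> a (real j / real N)) (real i / real N) \<le> ?L / real N + 1 / real N"
    using dc_tri[OF Sj Sx pi] d1 d2 by simp
  then have "real N * dc (Smap \<Lambda> a (real j / real N)) (real i / real N) \<le> real N * (?L / real N + 1 / real N)"
    using Npos by (intro mult_left_mono) auto
  also have "\<dots> = ?L + 1" using Npos by (simp add: field_simps)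
  finally show ?thesis .
qed

lemma sum_nz: "(\<Sum>i<(N::nat). f i) \<noteq> (0::complex) \<Longrightarrow> \<exists>i<N. f i \<noteq> 0"
  by (metis lessThan_iff sum.neutral)

lemma V_supp:
  assumes c: "cond1 T l \<Lambda> a" and q: "is_quantization T N U" and N: "N > 0"
  shows "m < N \<Longrightarrow> j < N \<Longrightarrow> mpow N U n m j \<noteq> 0 \<Longrightarrow>
     real N * dc (real m / real N) ((Smap \<Lambda> a ^^ n) (real j / real N)) \<le> 3 * Lmax \<Lambda> l ^ n - 3"
proof (induction n arbitrary: j)
  case 0
  then show ?case by (simp add: mid_def split: if_splits)
next
  case (Suc n)
  let ?L = "Lmax \<Lambda> l"
  let ?S = "Smap \<Lambda> a"
  have L2: "2 \<le> ?L" by (rule Lmax_ge2[OF c])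
  have "(\<Sum>i<N. mpow N U n m i * U i j) \<noteq> 0" using Suc.prems by (simp add: mmul_def)
  then obtain i where i: "i < N" "mpow N U n m i * U i j \<noteq> 0" using sum_nz by blast
  then have i1: "mpow N U n m i \<noteq> 0" and i2: "U i j \<noteq> 0" by auto
  have IH: "real N * dc (real m / real N) ((?S ^^ n) (real i / real N)) \<le> 3 * ?L ^ n - 3"
    using Suc.IH[OF Suc.prems(1) i(1) i1] .
  have Npos: "real N > 0" using N by simp
  have pm: "real m / real N \<in> {0..1}" and pi: "real i / real N \<in> {0..1}" and pj: "real j / real N \<in> {0..1}"
    using i Suc.prems by (auto simp: field_simps)
  have sj: "?S (real j / real N) \<in> {0..1}" using S_range[OF c pj] .
  have st: "real N * dc (real i / real N) (?S (real j / real N)) \<le> ?L + 1"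
    using U_step[OF c q N i(1) Suc.prems(2) i2] dc_sym by metis
  have lip: "dc ((?S ^^ n) (real i / real N)) ((?S ^^ n) (?S (real j / real N))) \<le> ?L ^ n * dc (real i / real N) (?S (real j / real N))"
    by (rule Sn_lip[OF c pi sj])
  have eq: "(?S ^^ Suc n) (real j / real N) = (?S ^^ n) (?S (real j / real N))"
    by (simp add: funpow_Suc_right del: funpow.simps)
  have tri: "dc (real m / real N) ((?S ^^ n) (?S (real j / real N))) \<le>
      dc (real m / real N) ((?S ^^ n) (real i / real N)) + dc ((?S ^^ n) (real i / real N)) ((?S ^^ n) (?S (real j / real N)))"
    by (rule dc_tri[OF pm Sn_range[OF c pi] Sn_range[OF c sj]])
  have Ln: "0 \<le> ?L ^ n" using L2 by simp
  have "real N * dc ((?S ^^ n) (real i / real N)) ((?S ^^ n) (?S (real j / real N))) \<le> ?L ^ n * (real N * dc (real i / real N) (?S (real j / real N)))"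
    using mult_left_mono[OF lip, of "real N"] Npos by (simp add: algebra_simps)
  also have "\<dots> \<le> ?L ^ n * (?L + 1)" using st Ln by (intro mult_left_mono) auto
  finally have A: "real N * dc ((?S ^^ n) (real i / real N)) ((?S ^^ n) (?S (real j / real N))) \<le> ?L ^ n * (?L + 1)" .
  have B: "?L ^ n * (?L + 1) + 3 * ?L ^ n \<le> 3 * (?L * ?L ^ n)"
  proof -
    have "?L ^ n * (?L + 4) \<le> ?L ^ n * (3 * ?L)" using L2 Ln by (intro mult_left_mono) auto
    then show ?thesis by (simp add: algebra_simps)
  qed
  have "real N * dc (real m / real N) ((?S ^^ Suc n) (real j / real N)) \<le>
      real N * dc (real m / real N) ((?S ^^ n) (real i / real N)) + real N * dc ((?S ^^ n) (real i / real N)) ((?S ^^ n) (?S (real j / real N)))"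
    using mult_left_mono[OF tri, of "real N"] Npos eq by (simp add: algebra_simps)
  also have "\<dots> \<le> 3 * ?L ^ Suc n - 3" using IH A B by simp
  finally show ?case .
qed

lemma Vs_supp:
  assumes c: "cond1 T l \<Lambda> a" and q: "is_quantization T N U" and N: "N > 0"
  shows "j < N \<Longrightarrow> m < N \<Longrightarrow> mpow N (madj U) n j m \<noteq> 0 \<Longrightarrow>
     real N * dc (real m / real N) ((Smap \<Lambda> a ^^ n) (real j / real N)) \<le> 3 * Lmax \<Lambda> l ^ n - 3"
proof (induction n arbitrary: m)
  case 0
  then show ?case by (simp add: mid_def split: if_splits)
next
  case (Suc n)
  let ?L = "Lmax \<Lambda> l"
  let ?S = "Smap \<Lambda> a"
  have L2: "2 \<le> ?L" by (rule Lmax_ge2[OF c])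
  have "(\<Sum>i<N. mpow N (madj U) n j i * cnj (U m i)) \<noteq> 0" using Suc.prems by (simp add: mmul_def madj_def)
  then obtain i where i: "i < N" "mpow N (madj U) n j i * cnj (U m i) \<noteq> 0" using sum_nz by blast
  then have i1: "mpow N (madj U) n j i \<noteq> 0" and i2: "U m i \<noteq> 0" by auto
  have IH: "real N * dc (real i / real N) ((?S ^^ n) (real j / real N)) \<le> 3 * ?L ^ n - 3"
    using Suc.IH[OF Suc.prems(1) i(1) i1] .
  have Npos: "real N > 0" using N by simp
  have pm: "real m / real N \<in> {0..1}" and pi: "real i / real N \<in> {0..1}" and pj: "real j / real N \<in> {0..1}"
    using i Suc.prems by (auto simp: field_simps)
  have sn: "(?S ^^ n) (real j / real N) \<in> {0..1}" using Sn_range[OF c pj] .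
  have si: "?S (real i / real N) \<in> {0..1}" using S_range[OF c pi] .
  have st: "real N * dc (real m / real N) (?S (real i / real N)) \<le> ?L + 1"
    using U_step[OF c q N Suc.prems(2) i(1) i2] dc_sym by metis
  have lip: "dc (?S (real i / real N)) (?S ((?S ^^ n) (real j / real N))) \<le> ?L * dc (real i / real N) ((?S ^^ n) (real j / real N))"
    by (rule S_lip[OF c pi sn])
  have eq: "(?S ^^ Suc n) (real j / real N) = ?S ((?S ^^ n) (real j / real N))" by simp
  have tri: "dc (real m / real N) (?S ((?S ^^ n) (real j / real N))) \<le>
      dc (real m / real N) (?S (real i / real N)) + dc (?S (real i / real N)) (?S ((?S ^^ n) (real j / real N)))"
    by (rule dc_tri[OF pm si S_range[OF c sn]])
  have Ln: "0 \<le> ?L ^ n" using L2 by simp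
  have "real N * dc (?S (real i / real N)) (?S ((?S ^^ n) (real j / real N))) \<le> ?L * (real N * dc (real i / real N) ((?S ^^ n) (real j / real N)))"
    using mult_left_mono[OF lip, of "real N"] Npos by (simp add: algebra_simps)
  also have "\<dots> \<le> ?L * (3 * ?L ^ n - 3)" using IH L2 by (intro mult_left_mono) auto
  finally have A: "real N * dc (?S (real i / real N)) (?S ((?S ^^ n) (real j / real N))) \<le> ?L * (3 * ?L ^ n - 3)" .
  have "real N * dc (real m / real N) ((?S ^^ Suc n) (real j / real N)) \<le>
      real N * dc (real m / real N) (?S (real i / real N)) + real N * dc (?S (real i / real N)) (?S ((?S ^^ n) (real j / real N)))"
    using mult_left_mono[OF tri, of "real N"] Npos eq by (simp add: algebra_simps)
  also have "\<dots> \<le> (?L + 1) + ?L * (3 * ?L ^ n - 3)" using st A by simp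
  also have "\<dots> \<le> 3 * ?L ^ Suc n - 3" using L2 by (simp add: algebra_simps)
  finally show ?case .
qed



definition Lf :: "(real \<Rightarrow> complex) \<Rightarrow> real" where
  "Lf f = (SUP p\<in>{(x, y). x \<in> {0..1} \<and> y \<in> {0..1} \<and> dc x y > 0}.
        cmod (f (fst p) - f (snd p)) / dc (fst p) (snd p))"
definition Sf :: "(real \<Rightarrow> complex) \<Rightarrow> real" where
  "Sf f = (SUP x\<in>{0..1}. cmod (f x))"

lemma lip_norm_split: "lip_norm f = Sf f + Lf f"
  by (simp add: lip_norm_def Lf_def Sf_def)

lemma Sf_bound:
  assumes "in_LipIc f" and x: "x \<in> {0..1}"
  shows "cmod (f x) \<le> Sf f"
proof -
  have "bounded (f ` {0..1})" using assms by (simp add: in_LipIc_def)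
  then obtain B where "\<forall>y\<in>f ` {0..1}. norm y \<le> B" by (meson bounded_iff)
  then have "bdd_above ((\<lambda>x. cmod (f x)) ` {0..1})" by (auto intro!: bdd_aboveI2)
  then show ?thesis unfolding Sf_def by (rule cSUP_upper[OF x])
qed

lemma Sf_nonneg: "in_LipIc f \<Longrightarrow> 0 \<le> Sf f"
  using Sf_bound[of f 0] norm_ge_zero[of "f 0"] by (meson atLeastAtMost_iff order_trans zero_le_one order_refl)

lemma Lf_bound:
  assumes f: "in_LipIc f" and x: "x \<in> {0..1}" and y: "y \<in> {0..1}"
  shows "cmod (f x - f y) \<le> Lf f * dc x y \<and> 0 \<le> Lf f"
proof -
  obtain L where L: "\<forall>x\<in>{0..1}. \<forall>y\<in>{0..1}. cmod (f x - f y) \<le> L * dc x y"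
    using f by (auto simp: in_LipIc_def)
  let ?A = "{(x, y). x \<in> {0..1} \<and> y \<in> {0..1} \<and> dc x y > 0}"
  let ?r = "\<lambda>p. cmod (f (fst p) - f (snd p)) / dc (fst p) (snd p)"
  have bdd: "bdd_above (?r ` ?A)"
  proof (rule bdd_aboveI2)
    fix p assume "p \<in> ?A"
    then obtain u v where p: "p = (u, v)" "u \<in> {0..1}" "v \<in> {0..1}" "dc u v > 0" by auto
    then show "?r p \<le> L" using L by (simp add: divide_le_eq)
  qed
  have upper: "?r p \<le> Lf f" if "p \<in> ?A" for p
    unfolding Lf_def by (rule cSUP_upper[OF that bdd])
  have "(0::real, 1/2) \<in> ?A" by (simp add: dc_def)
  moreover have "0 \<le> ?r (0::real, 1/2)" by (simp add: dc_def)
  ultimately have L0: "0 \<le> Lf f" using upper[of "(0, 1/2)"] by linarith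
  show ?thesis
  proof (cases "dc x y > 0")
    case True
    then have "?r (x, y) \<le> Lf f" using upper x y by auto
    then show ?thesis using True L0 by (simp add: divide_le_eq)
  next
    case False
    then have "dc x y = 0" using dc_nonneg[OF x y] by simp
    then have "cmod (f x - f y) \<le> 0" using L x y by (metis mult_zero_right)
    then show ?thesis using L0 \<open>dc x y = 0\<close> by simp
  qed
qed

lemma Lf_nonneg: "in_LipIc f \<Longrightarrow> 0 \<le> Lf f"
  using Lf_bound[of f 0 0] by simp

lemma lipf_bounds: "in_LipIc f \<Longrightarrow> Sf f \<le> lip_norm f \<and> Lf f \<le> lip_norm f"
  using Sf_nonneg Lf_nonneg lip_norm_split by (metis add_increasing add_increasing2 order_refl)

lemma f_cont: assumes f: "in_LipIc f" shows "continuous_on {0..1} f"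
proof (rule lipschitz_on_continuous_on)
  show "(Lf f)-lipschitz_on {0..1} f"
  proof (rule lipschitz_onI)
    fix x y :: real assume "x \<in> {0..1}" "y \<in> {0..1}"
    then have "cmod (f x - f y) \<le> Lf f * dc x y" using Lf_bound[OF f] by blast
    also have "\<dots> \<le> Lf f * \<bar>x - y\<bar>" using Lf_nonneg[OF f] dc_le_abs by (intro mult_left_mono) auto
    finally show "dist (f x) (f y) \<le> Lf f * dist x y" by (simp add: dist_norm)
  qed (rule Lf_nonneg[OF f])
qed

lemma cell_sub: "m < N \<Longrightarrow> cell N m \<subseteq> {0..1}"
  by (auto simp: cell_def field_simps)

lemma content_cell: "N > 0 \<Longrightarrow> Henstock_Kurzweil_Integration.content (cell N m) = 1 / real N"
  by (simp add: cell_def field_simps)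

lemma cell_avg:
  assumes f: "in_LipIc f" and N: "N > 0" and m: "m < N" and c: "\<And>x. x \<in> cell N m \<Longrightarrow> cmod (f x - z) \<le> B"
    and B: "0 \<le> B"
  shows "cmod (of_nat N * integral (cell N m) f - z) \<le> B"
proof -
  have int: "f integrable_on cell N m"
    unfolding cell_def
    by (rule integrable_continuous_interval, rule continuous_on_subset[OF f_cont[OF f]])
      (use cell_sub[OF m] in \<open>simp add: cell_def\<close>)
  have hi: "((\<lambda>x. f x - z) has_integral (integral (cell N m) f - Henstock_Kurzweil_Integration.content (cell N m) *\<^sub>R z)) (cell N m)"
    unfolding cell_def
    by (rule has_integral_diff[OF int[unfolded cell_def, THEN integrable_integral] has_integral_const_real])
  have "cmod (integral (cell N m) f - Henstock_Kurzweil_Integration.content (cell N m) *\<^sub>R z) \<le> B * Henstock_Kurzweil_Integration.content (cell N m)"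
    unfolding cell_def by (rule has_integral_bound_real[OF B finite.emptyI hi[unfolded cell_def]]) (use c in \<open>auto simp: cell_def\<close>)
  then have A: "cmod (integral (cell N m) f - (1 / real N) *\<^sub>R z) \<le> B / real N"
    using content_cell[OF N, of m] by simp
  have "of_nat N * integral (cell N m) f - z = of_nat N * (integral (cell N m) f - (1 / real N) *\<^sub>R z)"
    using N by (simp add: algebra_simps scaleR_conv_of_real)
  then have "cmod (of_nat N * integral (cell N m) f - z) = real N * cmod (integral (cell N m) f - (1 / real N) *\<^sub>R z)"
    by (simp add: norm_mult)
  also have "\<dots> \<le> real N * (B / real N)" using A by (intro mult_left_mono) auto
  also have "\<dots> = B" using N by simp
  finally show ?thesis .
qed

lemma phi_bound:
  assumes f: "in_LipIc f" and N: "N > 0" and m: "m < N" and y: "y \<in> {0..1}"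
  shows "cmod (of_nat N * integral (cell N m) f - f y) \<le> Lf f * (dc (real m / real N) y + 1 / real N)"
proof (rule cell_avg[OF f N m])
  show "0 \<le> Lf f * (dc (real m / real N) y + 1 / real N)"
    using Lf_nonneg[OF f] dc_nonneg[OF _ y, of "real m / real N"] m by (simp add: field_simps)
  fix x assume x: "x \<in> cell N m"
  have x01: "x \<in> {0..1}" using cell_sub[OF m] x by auto
  have pm: "real m / real N \<in> {0..1}" using m by (simp add: field_simps)
  have t: "dc x y \<le> dc x (real m / real N) + dc (real m / real N) y" by (rule dc_tri[OF x01 pm y])
  have "dc x (real m / real N) \<le> 1 / real N"
    using dc_le_abs[of x "real m / real N"] x by (auto simp: cell_def add_divide_distrib)
  with t have "dc x y \<le> 1 / real N + dc (real m / real N) y" by linarith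
  then have "Lf f * dc x y \<le> Lf f * (dc (real m / real N) y + 1 / real N)"
    using Lf_nonneg[OF f] by (intro mult_left_mono) auto
  then show "cmod (f x - f y) \<le> Lf f * (dc (real m / real N) y + 1 / real N)"
    using Lf_bound[OF f x01 y] by linarith
qed

lemma phi_abs:
  assumes f: "in_LipIc f" and N: "N > 0" and m: "m < N"
  shows "cmod (of_nat N * integral (cell N m) f) \<le> Sf f"
proof -
  have "\<And>x. x \<in> cell N m \<Longrightarrow> cmod (f x - 0) \<le> Sf f" using Sf_bound[OF f] cell_sub[OF m] by auto
  from cell_avg[OF f N m this Sf_nonneg[OF f]] show ?thesis by simp
qed



lemma opnorm_le:
  assumes c: "c \<ge> 0" and b: "\<And>v. ns N (app N A v) \<le> c\<^sup>2 * ns N v"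
  shows "opnorm N A \<le> c"
proof -
  have eq: "{sqrt (\<Sum>i<N. (cmod (\<Sum>j<N. A i j * v j))\<^sup>2) | v. (\<Sum>j<N. (cmod (v j))\<^sup>2) \<le> 1}
      = (\<lambda>v. sqrt (ns N (app N A v))) ` {v. ns N v \<le> 1}"
    unfolding ns_def app_def by auto
  have ne: "(\<lambda>v. sqrt (ns N (app N A v))) ` {v. ns N v \<le> 1} \<noteq> {}"
  proof -
    have "(\<lambda>_. 0) \<in> {v. ns N v \<le> 1}" by (simp add: ns_def)
    then show ?thesis by blast
  qed
  have "Sup ((\<lambda>v. sqrt (ns N (app N A v))) ` {v. ns N v \<le> 1}) \<le> c"
  proof (rule cSup_least[OF ne])
    fix s assume "s \<in> (\<lambda>v. sqrt (ns N (app N A v))) ` {v. ns N v \<le> 1}"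
    then obtain v where s: "s = sqrt (ns N (app N A v))" and v: "ns N v \<le> 1" by blast
    have "s \<le> sqrt (c\<^sup>2 * ns N v)" unfolding s using b real_sqrt_le_mono by blast
    also have "\<dots> = c * sqrt (ns N v)" using c by (simp add: real_sqrt_mult)
    also have "\<dots> \<le> c * 1" using v c ns_nonneg[of N v] by (intro mult_left_mono) auto
    finally show "s \<le> c" by simp
  qed
  then show ?thesis unfolding opnorm_def eq .
qed


lemma Op_diag: "Op N f = diag (\<lambda>i. of_nat N * integral (cell N i) f)"
  by (simp add: Op_def diag_def)

lemma Op_bound:
  assumes g: "in_LipIc g" and N: "N > 0"
  shows "ns N (app N (Op N g) z) \<le> (Sf g)\<^sup>2 * ns N z"
  unfolding Op_diag app_diag ns_def sum_distrib_left
proof (intro sum_mono)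
  fix i assume i: "i \<in> {..<N}"
  have "cmod (of_nat N * integral (cell N i) g) \<le> Sf g" using phi_abs[OF g N] i by simp
  then have "(cmod (of_nat N * integral (cell N i) g))\<^sup>2 \<le> (Sf g)\<^sup>2" by (intro power_mono) auto
  then show "(cmod (if i < N then of_nat N * integral (cell N i) g * z i else 0))\<^sup>2 \<le> (Sf g)\<^sup>2 * (cmod (z i))\<^sup>2"
    using i by (simp add: norm_mult power_mult_distrib mult_right_mono)
qed

lemma main_bound:
  assumes c: "cond1 T l \<Lambda> a" and q: "is_quantization T N U" and N: "N > 0"
    and f: "in_LipIc f" and g: "in_LipIc g"
  shows "opnorm N (commutator N (mmul N (mmul N (mpow N (madj U) n) (Op N f)) (mpow N U n)) (Op N g))
       \<le> 77 * Lf f * Sf g * Lmax \<Lambda> l ^ n / real N"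
proof -
  define V where "V = mpow N U n"
  define Vs where "Vs = mpow N (madj U) n"
  define F where "F = Op N f"
  define G where "G = Op N g"
  define Hm where "Hm = mmul N (mmul N V G) Vs"
  define X where "X = mmul N (mmul N Vs F) V"
  define \<rho> where "\<rho> = 6 * Lmax \<Lambda> l ^ n / real N"
  have un: "is_unitary N U" using q by (simp add: is_quantization_def)
  have L2: "2 \<le> Lmax \<Lambda> l" by (rule Lmax_ge2[OF c])
  have Ln1: "1 \<le> Lmax \<Lambda> l ^ n" using L2 by (simp add: one_le_power)
  have Npos: "real N > 0" using N by simp
  have rho: "\<rho> > 0" using Ln1 Npos by (simp add: \<rho>_def)
  have appH: "app N Hm z = app N V (app N G (app N Vs z))" for z
    by (simp add: Hm_def app_mmul)
  have appX: "app N X z = app N Vs (app N F (app N V z))" for z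
    by (simp add: X_def app_mmul)
  have VsV: "app N Vs (app N V w) = trunc N w" for w
    unfolding V_def Vs_def by (rule pow_unitary[OF un])
  have Hb: "ns N (app N Hm z) \<le> (Sf g)\<^sup>2 * ns N z" for z
  proof -
    have "ns N (app N Hm z) = ns N (app N G (app N Vs z))"
      by (simp add: appH V_def pow_iso[OF un])
    also have "\<dots> \<le> (Sf g)\<^sup>2 * ns N (app N Vs z)" unfolding G_def by (rule Op_bound[OF g N])
    also have "\<dots> \<le> (Sf g)\<^sup>2 * ns N z" unfolding Vs_def
      by (intro mult_left_mono powadj_contr[OF un]) auto
    finally show ?thesis .
  qed
  have Hs: "dc (real m / real N) (real m' / real N) \<le> \<rho>"
    if m: "m < N" and m': "m' < N" and h: "Hm m m' \<noteq> 0" for m m'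
  proof -
    have "(\<Sum>j<N. mmul N V G m j * Vs j m') \<noteq> 0" using h by (simp add: Hm_def mmul_def)
    then obtain j where j: "j < N" "mmul N V G m j \<noteq> 0" "Vs j m' \<noteq> 0"
      using sum_nz[of "\<lambda>j. mmul N V G m j * Vs j m'" N] by auto
    then have "(\<Sum>i<N. V m i * G i j) \<noteq> 0" by (simp add: mmul_def)
    then obtain i where i: "i < N" "V m i * G i j \<noteq> 0"
      using sum_nz[of "\<lambda>i. V m i * G i j" N] by auto
    then have "i = j" by (simp add: G_def Op_def split: if_splits)
    then have vmj: "V m j \<noteq> 0" using i by auto
    let ?P = "(Smap \<Lambda> a ^^ n) (real j / real N)"
    have pj: "real j / real N \<in> {0..1}" using j by (simp add: field_simps)
    have P01: "?P \<in> {0..1}" by (rule Sn_range[OF c pj])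
    have pm: "real m / real N \<in> {0..1}" "real m' / real N \<in> {0..1}" using m m' by (auto simp: field_simps)
    have d1: "real N * dc (real m / real N) ?P \<le> 3 * Lmax \<Lambda> l ^ n - 3"
      using V_supp[OF c q N m j(1) vmj[unfolded V_def]] .
    have d2: "real N * dc (real m' / real N) ?P \<le> 3 * Lmax \<Lambda> l ^ n - 3"
      using Vs_supp[OF c q N j(1) m' j(3)[unfolded Vs_def]] .
    have "dc (real m / real N) (real m' / real N) \<le> dc (real m / real N) ?P + dc ?P (real m' / real N)"
      by (rule dc_tri[OF pm(1) P01 pm(2)])
    then have "real N * dc (real m / real N) (real m' / real N) \<le> real N * dc (real m / real N) ?P + real N * dc (real m' / real N) ?P"
      using Npos dc_sym[of ?P "real m' / real N"] by (simp add: distrib_left[symmetric] mult_left_mono)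
    also have "\<dots> \<le> 6 * Lmax \<Lambda> l ^ n" using d1 d2 by simp
    finally have "real N * dc (real m / real N) (real m' / real N) \<le> 6 * Lmax \<Lambda> l ^ n" .
    then show ?thesis unfolding \<rho>_def using Npos by (simp add: field_simps)
  qed
  have band': "ns N (app N (commutator N F Hm) y) \<le> 110 * (Lf f * Sf g * (\<rho> + 1 / real N))\<^sup>2 * ns N y" for y
    unfolding F_def Op_diag
    by (rule band[OF N rho Sf_nonneg[OF g] Lf_nonneg[OF f] Hb Hs phi_bound[OF f N]]) auto
  have key: "app N (commutator N X G) v = app N Vs (app N (commutator N F Hm) (app N V v))" for v
  proof -
    have t1: "app N Hm (app N V v) = app N V (app N G v)"
      by (simp add: appH VsV)
    have t2: "app N Vs (app N Hm w) = app N G (app N Vs w)" for w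
      by (simp add: appH VsV)
    show ?thesis
      by (simp add: app_comm app_diff t1 t2 appX)
  qed
  have nb: "ns N (app N (commutator N X G) v) \<le> (sqrt 110 * (Lf f * Sf g * (\<rho> + 1 / real N)))\<^sup>2 * ns N v" for v
  proof -
    have "ns N (app N (commutator N X G) v) \<le> ns N (app N (commutator N F Hm) (app N V v))"
      unfolding key Vs_def by (rule powadj_contr[OF un])
    also have "\<dots> \<le> 110 * (Lf f * Sf g * (\<rho> + 1 / real N))\<^sup>2 * ns N (app N V v)" by (rule band')
    also have "ns N (app N V v) = ns N v" unfolding V_def by (rule pow_iso[OF un])
    finally show ?thesis by (simp add: power_mult_distrib)
  qed
  have c0: "0 \<le> sqrt 110 * (Lf f * Sf g * (\<rho> + 1 / real N))"
    using Lf_nonneg[OF f] Sf_nonneg[OF g] rho Npos by simp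
  have "opnorm N (commutator N X G) \<le> sqrt 110 * (Lf f * Sf g * (\<rho> + 1 / real N))"
    by (rule opnorm_le[OF c0 nb])
  also have "\<dots> \<le> 11 * (Lf f * Sf g * (7 * Lmax \<Lambda> l ^ n / real N))"
  proof (rule mult_mono)
    have "sqrt 110 \<le> sqrt (121::real)" by (rule real_sqrt_le_mono) simp
    also have "sqrt 121 = (11::real)" by (simp add: real_sqrt_unique)
    finally show "sqrt 110 \<le> 11" .
    have "\<rho> + 1 / real N \<le> 7 * Lmax \<Lambda> l ^ n / real N"
      using Ln1 Npos by (simp add: \<rho>_def field_simps)
    then show "Lf f * Sf g * (\<rho> + 1 / real N) \<le> Lf f * Sf g * (7 * Lmax \<Lambda> l ^ n / real N)"
      using Lf_nonneg[OF f] Sf_nonneg[OF g] by (intro mult_left_mono) auto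
  qed (use Lf_nonneg[OF f] Sf_nonneg[OF g] rho Npos in auto)
  also have "\<dots> = 77 * Lf f * Sf g * Lmax \<Lambda> l ^ n / real N" by simp
  finally show ?thesis unfolding X_def G_def Vs_def F_def V_def .
qed

theorem proposition1:
  fixes T :: "real \<Rightarrow> real" and l :: nat and \<Lambda> :: "nat \<Rightarrow> nat" and a :: "nat \<Rightarrow> real"
  assumes "cond1 T l \<Lambda> a" and "quantizable T l a"
  shows "\<exists>D::real. \<forall>(N::nat \<Rightarrow> nat) (k::nat) (U::nat \<Rightarrow> nat \<Rightarrow> complex)
            (f::real \<Rightarrow> complex) (g::real \<Rightarrow> complex) (n::nat).
     cond2 N l a \<and> k \<ge> 1 \<and> is_quantization T (N k) U \<and> in_LipIc f \<and> in_LipIc g \<and> n \<ge> 1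
     \<longrightarrow> opnorm (N k)
           (commutator (N k)
              (mmul (N k) (mmul (N k) (mpow (N k) (madj U) n) (Op (N k) f)) (mpow (N k) U n))
              (Op (N k) g))
         \<le> 2 * D * lip_norm g * lip_norm f * real (Max (\<Lambda> ` {1..l})) ^ n / real (N k)"
proof (intro exI[of _ "77/2"] allI impI)
  fix N :: "nat \<Rightarrow> nat" and k :: nat and U :: "nat \<Rightarrow> nat \<Rightarrow> complex" and f g :: "real \<Rightarrow> complex" and n :: nat
  assume h: "cond2 N l a \<and> k \<ge> 1 \<and> is_quantization T (N k) U \<and> in_LipIc f \<and> in_LipIc g \<and> n \<ge> 1"
  then have Nk: "N k > 0" by (simp add: cond2_def)
  have f: "in_LipIc f" and g: "in_LipIc g" and q: "is_quantization T (N k) U" using h by auto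
  have "opnorm (N k) (commutator (N k) (mmul (N k) (mmul (N k) (mpow (N k) (madj U) n) (Op (N k) f)) (mpow (N k) U n)) (Op (N k) g))
      \<le> 77 * Lf f * Sf g * Lmax \<Lambda> l ^ n / real (N k)"
    by (rule main_bound[OF assms(1) q Nk f g])
  also have "\<dots> \<le> 77 * lip_norm f * lip_norm g * Lmax \<Lambda> l ^ n / real (N k)"
  proof -
    have "Lf f * Sf g \<le> lip_norm f * lip_norm g"
      using lipf_bounds[OF f] lipf_bounds[OF g] Lf_nonneg[OF f] Sf_nonneg[OF g] by (intro mult_mono) auto
    moreover have "0 \<le> Lmax \<Lambda> l ^ n / real (N k)" using Lmax_ge2[OF assms(1)] by simp
    ultimately have "77 * (Lf f * Sf g) * (Lmax \<Lambda> l ^ n / real (N k)) \<le> 77 * (lip_norm f * lip_norm g) * (Lmax \<Lambda> l ^ n / real (N k))"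
      by (intro mult_right_mono) auto
    then show ?thesis by (simp add: mult.assoc)
  qed
  also have "\<dots> = 2 * (77 / 2) * lip_norm g * lip_norm f * real (Max (\<Lambda> ` {1..l})) ^ n / real (N k)"
    by (simp add: Lmax_def)
  finally show "opnorm (N k) (commutator (N k) (mmul (N k) (mmul (N k) (mpow (N k) (madj U) n) (Op (N k) f)) (mpow (N k) U n)) (Op (N k) g))
         \<le> 2 * (77 / 2) * lip_norm g * lip_norm f * real (Max (\<Lambda> ` {1..l})) ^ n / real (N k)" .
qed

end
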